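(* Let $G$ be a graph with $n$ nodes and graph Laplacian $\mathbf{L}$. Then a matrix $\mathbf{P}\in\mathbb{R}^{n\times d}$ is node- and adjacency-identifying if $\mathbf{L}=\mathbf{P}\mathbf{P}^T$.
   Context: Graphs are finite, undirected, without self-loops and without isolated nodes; $\mathbf{L}=\mathbf{D}-\mathbf{A}(G)$ with $\mathbf{D}$ the degree matrix and $\mathbf{A}(G)$ the adjacency matrix; $d_k>0$ is a fixed constant. For $\mathbf{W}^Q,\mathbf{W}^K\in\mathbb{R}^{d\times d}$ put $\tilde{\mathbf{P}}=\frac{1}{\sqrt{d_k}}\mathbf{P}\mathbf{W}^Q(\mathbf{P}\mathbf{W}^K)^T$. $\mathbf{P}$ is node-identifying if for some $\mathbf{W}^Q,\mathbf{W}^K$: $\tilde{\mathbf{P}}_{ij}=\max_k\tilde{\mathbf{P}}_{ik}\iff i=j$; adjacency-identifying if for some (possibly different) $\mathbf{W}^Q,\mathbf{W}^K$: $\tilde{\mathbf{P}}_{ij}=\max_k\tilde{\mathbf{P}}_{ik}\iff\mathbf{A}(G)_{ij}=1$. *)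

theory Defs
  imports "HOL-Analysis.Analysis"
begin

definition graph :: "('n::finite \<Rightarrow> 'n \<Rightarrow> bool) \<Rightarrow> bool" where
  "graph E \<longleftrightarrow> (\<forall>i j. E i j \<longrightarrow> E j i) \<and> (\<forall>i. \<not> E i i) \<and> (\<forall>i. \<exists>j. E i j)"

definition adjacency_matrix :: "('n::finite \<Rightarrow> 'n \<Rightarrow> bool) \<Rightarrow> real^'n^'n" where
  "adjacency_matrix E = (\<chi> i j. if E i j then 1 else 0)"

definition degree_matrix :: "('n::finite \<Rightarrow> 'n \<Rightarrow> bool) \<Rightarrow> real^'n^'n" where
  "degree_matrix E = (\<chi> i j. if i = j then real (card {k. E i k}) else 0)"

definition laplacian :: "('n::finite \<Rightarrow> 'n \<Rightarrow> bool) \<Rightarrow> real^'n^'n" where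
  "laplacian E = degree_matrix E - adjacency_matrix E"

definition ptilde :: "real \<Rightarrow> real^'d^'n \<Rightarrow> real^'d^'d \<Rightarrow> real^'d^'d \<Rightarrow> real^'n^'n" where
  "ptilde dk P WQ WK = (1 / sqrt dk) *\<^sub>R ((P ** WQ) ** transpose (P ** WK))"

definition node_identifying :: "real \<Rightarrow> real^'d^'n::finite \<Rightarrow> bool" where
  "node_identifying dk P \<longleftrightarrow> (\<exists>WQ WK. \<forall>i j.
     (ptilde dk P WQ WK $ i $ j = Max (range (\<lambda>k. ptilde dk P WQ WK $ i $ k))) \<longleftrightarrow> i = j)"

definition adjacency_identifying ::
  "('n::finite \<Rightarrow> 'n \<Rightarrow> bool) \<Rightarrow> real \<Rightarrow> real^'d^'n \<Rightarrow> bool" where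
  "adjacency_identifying E dk P \<longleftrightarrow> (\<exists>WQ WK. \<forall>i j.
     (ptilde dk P WQ WK $ i $ j = Max (range (\<lambda>k. ptilde dk P WQ WK $ i $ k)))
       \<longleftrightarrow> adjacency_matrix E $ i $ j = 1)"

end

theory Submission
  imports Defs
begin

lemma L_entry: "laplacian E $ i $ j =
  (if i = j then real (card {k. E i k}) else 0) - (if E i j then 1 else 0)"
  by (simp add: laplacian_def degree_matrix_def adjacency_matrix_def)

lemma card_pos: assumes "graph E" shows "real (card {k. E (i::'n::finite) k}) \<ge> 1"
proof -
  obtain j where "E i j" using assms unfolding graph_def by blast
  hence "{k. E i k} \<noteq> {}" by blast
  hence "card {k. E i k} \<ge> 1" by (simp add: Suc_le_eq card_gt_0_iff)
  thus ?thesis by simp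
qed

lemma ptilde_id: "ptilde dk P (mat 1) (mat 1) = (1 / sqrt dk) *\<^sub>R (P ** transpose P)"
  by (simp add: ptilde_def)

lemma ptilde_neg: "ptilde dk P (mat 1) (- mat 1) = (- (1 / sqrt dk)) *\<^sub>R (P ** transpose P)"
proof -
  have "P ** (- mat 1) = - P"
    by (simp add: matrix_matrix_mult_def vec_eq_iff mat_def if_distrib sum.If_cases cong: if_cong)
  moreover have "transpose (- P) = - transpose P"
    by (simp add: transpose_def vec_eq_iff)
  moreover have "P ** (- transpose P) = - (P ** transpose P)"
    by (simp add: matrix_matrix_mult_def vec_eq_iff sum_negf)
  ultimately show ?thesis by (simp add: ptilde_def)
qed

theorem lemmaF7:
  fixes E :: "'n::finite \<Rightarrow> 'n \<Rightarrow> bool" and P :: "real^'d^'n" and dk :: real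
  assumes "graph E" and "dk > 0"
    and "laplacian E = P ** transpose P"
  shows "node_identifying dk P \<and> adjacency_identifying E dk P"
proof
  define c where "c = 1 / sqrt dk"
  have c: "c > 0" using assms(2) by (simp add: c_def)
  have irr: "\<not> E i i" for i using assms(1) unfolding graph_def by blast
  show "node_identifying dk P"
    unfolding node_identifying_def
  proof (intro exI allI)
    fix i j :: 'n
    let ?f = "\<lambda>k. ptilde dk P (mat 1) (mat 1) $ i $ k"
    have f: "?f k = c * laplacian E $ i $ k" for k
      by (simp add: ptilde_id c_def assms(3))
    have lt: "?f k < ?f i" if "k \<noteq> i" for k
    proof -
      have "laplacian E $ i $ k \<le> 0" using that by (simp add: L_entry)
      moreover have "laplacian E $ i $ i \<ge> 1" using card_pos[OF assms(1)] irr by (simp add: L_entry)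
      ultimately show ?thesis using c f by (smt (verit) mult_strict_left_mono)
    qed
    have "Max (range ?f) = ?f i"
      apply (rule Max_eqI)
        apply simp
      apply (erule imageE, rename_tac k, case_tac "k = i")
      apply (simp only: order.refl)
      apply (simp only:, rule less_imp_le, rule lt, assumption)
      by (rule rangeI)
    thus "(?f j = Max (range ?f)) = (i = j)" using lt by (metis less_irrefl)
  qed
  show "adjacency_identifying E dk P"
    unfolding adjacency_identifying_def
  proof (intro exI allI)
    fix i j :: 'n
    let ?f = "\<lambda>k. ptilde dk P (mat 1) (- mat 1) $ i $ k"
    have f: "?f k = - c * laplacian E $ i $ k" for k
      unfolding ptilde_neg c_def assms(3)[symmetric] by simp
    have fk: "?f k = (if E i k then c else if k = i then - c * real (card {k. E i k}) else 0)" for k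
    proof (cases "E i k")
      case True
      then have "k \<noteq> i" using irr by metis
      then show ?thesis using True by (simp add: f L_entry)
    next
      case False
      then show ?thesis by (cases "k = i") (simp_all add: f L_entry)
    qed
    have ci: "- c * real (card {k. E i k}) < c"
    proof -
      have "0 \<le> c * real (card {k. E i k})" using c by simp
      thus ?thesis using c by linarith
    qed
    obtain j0 where j0: "E i j0" using assms(1) unfolding graph_def by blast
    have le: "?f k \<le> c" for k unfolding fk[of k] using ci c by simp
    have "Max (range ?f) = c"
      apply (rule Max_eqI)
        apply simp
      using le apply blast
      apply (rule image_eqI[of _ _ j0])
      using fk[of j0] j0 apply simp
      by (rule UNIV_I)
    moreover have "?f j = c \<longleftrightarrow> E i j" unfolding fk[of j] using ci c by simp
    ultimately show "(?f j = Max (range ?f)) = (adjacency_matrix E $ i $ j = 1)"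
      by (simp add: adjacency_matrix_def)
  qed
qed

end
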